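(* In the setting below, the curvature $R(a,b)=[\hat\nabla_a,\hat\nabla_b]-\hat\nabla_{\{a,b\}}$ of the preconnection $\hat\nabla$ satisfies, for $v,w,z\in\mathfrak g$ and $f,h,k\in C^\infty(N)$: $$R(v,w)({\rm d}z)=-\tfrac14{\rm d}[[v,w],z],\qquad R(v,w)({\rm d}h)=0,$$ $$R(v,h)({\rm d}z)=R(v,h)({\rm d}k)=0,\qquad R(f,h)({\rm d}z)=R(f,h)({\rm d}k)=0.$$
   Context: A Lie group with Lie algebra $\mathfrak g$ acts on a manifold $N$, with induced (Lie algebra) action $\xi\triangleright f$ on $C^\infty(N)$. On $C^\infty(N)\otimes S(\mathfrak g)\subset C^\infty(N\times\mathfrak g^* )$ the Poisson bracket is determined by $\{f,h\}=0$, $\{v,f\}=v\triangleright f$, $\{v,w\}=[v,w]$ ($f,h\in C^\infty(N)$, $v,w\in\mathfrak g$ viewed as linear functions on $\mathfrak g^*$). $\hat\nabla$ is the preconnection (i.e. $\hat\nabla_a(b\xi)=\{a,b\}\xi+b\hat\nabla_a\xi$, $\hat\nabla_{ab}=a\hat\nabla_b+b\hat\nabla_a$) determined by $\hat\nabla_v{\rm d}w=\frac12{\rm d}[v,w]$, $\hat\nabla_v{\rm d}h={\rm d}(v\triangleright h)$, $\hat\nabla_f{\rm d}w=0$, $\hat\nabla_f{\rm d}h=0$. *)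

theory Defs
  imports Main "HOL.Real_Vector_Spaces"
begin

text \<open>The algebra C^infty(N) tensor S(g), inside
C^infty(N x g*), is modelled by a real commutative algebra A (type 'a); C^infty(N) is a
subset Fn of A; the Lie algebra g is a real vector space 'g with bracket lb, embedded
into A by the linear map iota (elements of g as linear functions on g*); the
1-forms are an A-module 'm with module action smul and universal derivation d.\<close>

definition lie_bracket :: "('g::real_vector \<Rightarrow> 'g \<Rightarrow> 'g) \<Rightarrow> bool" where
  "lie_bracket lb \<longleftrightarrow>
     (\<forall>x y z. lb (x + y) z = lb x z + lb y z) \<and>
     (\<forall>r x y. lb (r *\<^sub>R x) y = r *\<^sub>R lb x y) \<and>
     (\<forall>x y. lb x y = - lb y x) \<and>
     (\<forall>x y z. lb x (lb y z) + lb y (lb z x) + lb z (lb x y) = 0)"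

definition poisson_bracket :: "('a::{real_algebra_1,comm_ring_1} \<Rightarrow> 'a \<Rightarrow> 'a) \<Rightarrow> bool" where
  "poisson_bracket pb \<longleftrightarrow>
     (\<forall>a b c. pb (a + b) c = pb a c + pb b c) \<and>
     (\<forall>r a b. pb (r *\<^sub>R a) b = r *\<^sub>R pb a b) \<and>
     (\<forall>a b. pb a b = - pb b a) \<and>
     (\<forall>a b c. pb a (pb b c) + pb b (pb c a) + pb c (pb a b) = 0) \<and>
     (\<forall>a b c. pb a (b * c) = pb a b * c + b * pb a c)"

definition module_over :: "('a::{real_algebra_1,comm_ring_1} \<Rightarrow> 'm::ab_group_add \<Rightarrow> 'm) \<Rightarrow> bool" where
  "module_over smul \<longleftrightarrow>
     (\<forall>a b m. smul (a * b) m = smul a (smul b m)) \<and>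
     (\<forall>m. smul 1 m = m) \<and>
     (\<forall>a b m. smul (a + b) m = smul a m + smul b m) \<and>
     (\<forall>a m n. smul a (m + n) = smul a m + smul a n)"

definition derivation_into :: "('a::{real_algebra_1,comm_ring_1} \<Rightarrow> 'm::ab_group_add \<Rightarrow> 'm) \<Rightarrow> ('a \<Rightarrow> 'm) \<Rightarrow> bool" where
  "derivation_into smul d \<longleftrightarrow>
     (\<forall>a b. d (a + b) = d a + d b) \<and>
     (\<forall>r a. d (r *\<^sub>R a) = smul (of_real r) (d a)) \<and>
     (\<forall>a b. d (a * b) = smul a (d b) + smul b (d a))"

definition preconnection ::
  "('a::{real_algebra_1,comm_ring_1} \<Rightarrow> 'a \<Rightarrow> 'a) \<Rightarrow> ('a \<Rightarrow> 'm::ab_group_add \<Rightarrow> 'm) \<Rightarrow> ('a \<Rightarrow> 'm \<Rightarrow> 'm) \<Rightarrow> bool" where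
  "preconnection pb smul nabla \<longleftrightarrow>
     (\<forall>a b xi. nabla (a + b) xi = nabla a xi + nabla b xi) \<and>
     (\<forall>r a xi. nabla (r *\<^sub>R a) xi = smul (of_real r) (nabla a xi)) \<and>
     (\<forall>a xi eta. nabla a (xi + eta) = nabla a xi + nabla a eta) \<and>
     (\<forall>a b xi. nabla a (smul b xi) = smul (pb a b) xi + smul b (nabla a xi)) \<and>
     (\<forall>a b xi. nabla (a * b) xi = smul a (nabla b xi) + smul b (nabla a xi))"

definition curvature ::
  "('a \<Rightarrow> 'a \<Rightarrow> 'a) \<Rightarrow> ('a \<Rightarrow> 'm::ab_group_add \<Rightarrow> 'm) \<Rightarrow> 'a \<Rightarrow> 'a \<Rightarrow> 'm \<Rightarrow> 'm" where
  "curvature pb nabla a b xi = nabla a (nabla b xi) - nabla b (nabla a xi) - nabla (pb a b) xi"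

end

theory Submission
  imports Defs
begin

theorem proposition6p1p4:
  fixes pb :: "'a::{real_algebra_1,comm_ring_1} \<Rightarrow> 'a \<Rightarrow> 'a"
    and lb :: "'g::real_vector \<Rightarrow> 'g \<Rightarrow> 'g"
    and iota :: "'g \<Rightarrow> 'a"
    and Fn :: "'a set"
    and act :: "'g \<Rightarrow> 'a \<Rightarrow> 'a"
    and smul :: "'a \<Rightarrow> 'm::ab_group_add \<Rightarrow> 'm"
    and d :: "'a \<Rightarrow> 'm"
    and nabla :: "'a \<Rightarrow> 'm \<Rightarrow> 'm"
  assumes lie: "lie_bracket lb"
    and iota_lin: "linear iota"
    and pois: "poisson_bracket pb"
    and act_F: "\<And>v f. f \<in> Fn \<Longrightarrow> act v f \<in> Fn"
    and br_FF: "\<And>f h. f \<in> Fn \<Longrightarrow> h \<in> Fn \<Longrightarrow> pb f h = 0"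
    and br_gF: "\<And>v f. f \<in> Fn \<Longrightarrow> pb (iota v) f = act v f"
    and br_gg: "\<And>v w. pb (iota v) (iota w) = iota (lb v w)"
    and modl: "module_over smul"
    and der: "derivation_into smul d"
    and prec: "preconnection pb smul nabla"
    and nab_gg: "\<And>v w. nabla (iota v) (d (iota w)) = smul (of_real (1/2)) (d (iota (lb v w)))"
    and nab_gF: "\<And>v h. h \<in> Fn \<Longrightarrow> nabla (iota v) (d h) = d (act v h)"
    and nab_Fg: "\<And>f w. f \<in> Fn \<Longrightarrow> nabla f (d (iota w)) = 0"
    and nab_FF: "\<And>f h. f \<in> Fn \<Longrightarrow> h \<in> Fn \<Longrightarrow> nabla f (d h) = 0"
  shows "\<forall>v w z. \<forall>f\<in>Fn. \<forall>h\<in>Fn. \<forall>k\<in>Fn.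
     curvature pb nabla (iota v) (iota w) (d (iota z))
        = smul (of_real (-(1/4))) (d (iota (lb (lb v w) z))) \<and>
     curvature pb nabla (iota v) (iota w) (d h) = 0 \<and>
     curvature pb nabla (iota v) h (d (iota z)) = 0 \<and>
     curvature pb nabla (iota v) h (d k) = 0 \<and>
     curvature pb nabla f h (d (iota z)) = 0 \<and>
     curvature pb nabla f h (d k) = 0"
proof -
  note L = lie[unfolded lie_bracket_def]
  note P = pois[unfolded poisson_bracket_def]
  note M = modl[unfolded module_over_def]
  note D = der[unfolded derivation_into_def]
  note C = prec[unfolded preconnection_def]
  have dadd: "\<And>a b. d (a + b) = d a + d b" using D by blast
  have dsub: "\<And>a b. d (a - b) = d a - d b"
    using additive.diff[of d] dadd unfolding additive_def by blast
  have d0: "d 0 = 0" using dsub[of 0 0] by simp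
  have smadd: "\<And>a b m. smul (a + b) m = smul a m + smul b m" using M by blast
  have smassoc: "\<And>a b m. smul (a * b) m = smul a (smul b m)" using M by blast
  have smaddm: "\<And>a m n. smul a (m + n) = smul a m + smul a n" using M by blast
  have sm0: "\<And>m. smul 0 m = 0" using smadd[of 0 0] by simp
  have smm0: "\<And>a. smul a 0 = 0" using smaddm[of _ 0 0] by simp
  have smsub: "\<And>a b m. smul (a - b) m = smul a m - smul b m"
    by (metis add_diff_cancel diff_add_cancel smadd eq_diff_eq)
  have nadd: "\<And>a b xi. nabla (a + b) xi = nabla a xi + nabla b xi" using C by blast
  have naddx: "\<And>a xi eta. nabla a (xi + eta) = nabla a xi + nabla a eta" using C by blast
  have nsm: "\<And>a b xi. nabla a (smul b xi) = smul (pb a b) xi + smul b (nabla a xi)" using C by blast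
  have n0: "\<And>xi. nabla 0 xi = 0" using nadd[of 0 0] by simp
  have nx0: "\<And>a. nabla a 0 = 0" using naddx[of _ 0 0] by simp
  have padd: "\<And>a b c. pb (a + b) c = pb a c + pb b c" using P by blast
  have pscal: "\<And>r a b. pb (r *\<^sub>R a) b = r *\<^sub>R pb a b" using P by blast
  have panti: "\<And>a b. pb a b = - pb b a" using P by blast
  have pjac: "\<And>a b c. pb a (pb b c) + pb b (pb c a) + pb c (pb a b) = 0" using P by blast
  have pleib: "\<And>a b c. pb a (b * c) = pb a b * c + b * pb a c" using P by blast
  have p1: "\<And>a. pb a 1 = 0" using pleib[of _ 1 1] by simp
  have pb0: "\<And>c. pb 0 c = 0" using padd[of 0 0] by simp
  have pneg1: "\<And>b c. pb (- b) c = - pb b c"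
    using padd pb0 by (metis add.left_inverse add_eq_0_iff)
  have pneg2: "\<And>a b. pb a (- b) = - pb a b"
  proof -
    fix a b
    have "pb a (- b) = - pb (- b) a" by (rule panti)
    also have "\<dots> = pb b a" by (simp add: pneg1)
    also have "\<dots> = - pb a b" by (rule panti)
    finally show "pb a (- b) = - pb a b" .
  qed
  have pr: "\<And>a r. pb a (of_real r) = 0"
  proof -
    fix a r
    have e: "pb a (of_real r) = - pb (of_real r) a" by (rule panti)
    have "pb (of_real r) a = pb (r *\<^sub>R (1::'a)) a" by (simp add: of_real_def)
    also have "\<dots> = r *\<^sub>R pb 1 a" by (rule pscal)
    also have "pb 1 a = - pb a 1" by (rule panti)
    finally show "pb a (of_real r) = 0" using e by (simp add: p1)
  qed
  have iadd: "\<And>x y. iota (x + y) = iota x + iota y" using iota_lin by (simp add: linear_add)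
  have isub: "\<And>x y. iota (x - y) = iota x - iota y" using iota_lin by (simp add: linear_diff)
  have lanti: "\<And>x y. lb x y = - lb y x" using L by blast
  have ljac: "\<And>x y z. lb x (lb y z) + lb y (lb z x) + lb z (lb x y) = 0" using L by blast
  have ladd: "\<And>x y z. lb (x + y) z = lb x z + lb y z" using L by blast
  have lscal: "\<And>r x y. lb (r *\<^sub>R x) y = r *\<^sub>R lb x y" using L by blast
  have lneg: "\<And>x y. lb (- x) y = - lb x y"
    using lscal[of "-1"] by simp
  have lneg2: "\<And>x y. lb x (- y) = - lb x y"
  proof -
    fix x y
    have "lb x (- y) = - lb (- y) x" by (rule lanti)
    also have "\<dots> = lb y x" by (simp add: lneg)
    also have "\<dots> = - lb x y" by (rule lanti)
    finally show "lb x (- y) = - lb x y" .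
  qed
  have ljac2: "\<And>v w z. lb v (lb w z) - lb w (lb v z) = lb (lb v w) z"
  proof -
    fix v w z
    have "lb v (lb w z) + lb w (lb z v) + lb z (lb v w) = 0" by (rule ljac)
    moreover have "lb w (lb z v) = - lb w (lb v z)"
      using lanti[of z v] lneg2 by simp
    moreover have "lb z (lb v w) = - lb (lb v w) z" by (rule lanti)
    ultimately show "lb v (lb w z) - lb w (lb v z) = lb (lb v w) z"
      by (simp add: algebra_simps eq_neg_iff_add_eq_0)
  qed
  have nsmr: "\<And>a r m. nabla a (smul (of_real r) m) = smul (of_real r) (nabla a m)"
    using nsm pr sm0 by simp
  show ?thesis
  proof (intro allI ballI conjI)
    fix v w z f h k
    assume f: "f \<in> Fn" and h: "h \<in> Fn" and k: "k \<in> Fn"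
    have e1: "nabla (iota v) (nabla (iota w) (d (iota z)))
       = smul (of_real (1/4)) (d (iota (lb v (lb w z))))"
      by (simp add: nab_gg nsmr smassoc[symmetric] of_real_mult[symmetric] del: of_real_mult)
    have e2: "nabla (iota w) (nabla (iota v) (d (iota z)))
       = smul (of_real (1/4)) (d (iota (lb w (lb v z))))"
      by (simp add: nab_gg nsmr smassoc[symmetric] of_real_mult[symmetric] del: of_real_mult)
    have "curvature pb nabla (iota v) (iota w) (d (iota z))
       = smul (of_real (1/4)) (d (iota (lb v (lb w z)))) - smul (of_real (1/4)) (d (iota (lb w (lb v z))))
         - smul (of_real (1/2)) (d (iota (lb (lb v w) z)))"
      unfolding curvature_def e1 e2 unfolding br_gg nab_gg ..
    also have "\<dots> = smul (of_real (1/4)) (d (iota (lb (lb v w) z)))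
         - smul (of_real (1/2)) (d (iota (lb (lb v w) z)))"
      using ljac2[of v w z] isub dsub
      by (metis (no_types, lifting) add_diff_cancel diff_add_cancel smaddm)
    also have "\<dots> = smul (of_real (1/4) - of_real (1/2)) (d (iota (lb (lb v w) z)))"
      by (simp add: smsub)
    also have "\<dots> = smul (of_real (-(1/4))) (d (iota (lb (lb v w) z)))"
      by (simp flip: of_real_diff)
    finally show "curvature pb nabla (iota v) (iota w) (d (iota z))
        = smul (of_real (-(1/4))) (d (iota (lb (lb v w) z)))" .
    have aj: "act v (act w h) - act w (act v h) - act (lb v w) h = 0"
    proof -
      have "pb (iota v) (pb (iota w) h) + pb (iota w) (pb h (iota v)) + pb h (pb (iota v) (iota w)) = 0"
        by (rule pjac)
      moreover have "pb h (iota v) = - act v h"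
        using panti[of h "iota v"] br_gF[OF h] by simp
      moreover have "pb (iota w) (- act v h) = - act w (act v h)"
        using pneg2 br_gF act_F h by simp
      moreover have "pb h (iota (lb v w)) = - act (lb v w) h"
        using panti[of h "iota (lb v w)"] br_gF[OF h] by simp
      ultimately show ?thesis using br_gF[OF h] br_gF[OF act_F[OF h]] br_gg
        by (simp add: algebra_simps)
    qed
    show "curvature pb nabla (iota v) (iota w) (d h) = 0"
      unfolding curvature_def using h act_F aj
      by (simp add: nab_gF br_gg dsub[symmetric] d0)
    show "curvature pb nabla (iota v) h (d (iota z)) = 0"
      unfolding curvature_def using h act_F
      by (simp add: nab_gg nab_Fg br_gF nx0 nsm pr sm0 smm0)
    show "curvature pb nabla (iota v) h (d k) = 0"
      unfolding curvature_def using h k act_F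
      by (simp add: nab_gF nab_FF nab_Fg br_gF nx0)
    show "curvature pb nabla f h (d (iota z)) = 0"
      unfolding curvature_def using f h
      by (simp add: nab_Fg br_FF nx0 n0)
    show "curvature pb nabla f h (d k) = 0"
      unfolding curvature_def using f h k
      by (simp add: nab_FF br_FF nx0 n0)
  qed
qed

end
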